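(* Let $m\ge3$ and $n\ge2$. For all $i,j\in[n]$ with $i\ne j$ and all $\alpha>0$, the tensor $\alpha(e^{(i)}-e^{(j)})^m+\alpha e^m$ belongs to $DNN_{m,n}\setminus CP_{m,n}$.
   Context: $e^{(i)}$ is the $i$th standard basis vector of $\mathbb{R}^n$ and $e=(1,\dots,1)^T\in\mathbb{R}^n$; $(u^m)_{i_1\ldots i_m}=u_{i_1}\cdots u_{i_m}$. $(\mathcal{A}x^{m-1})_i=\sum_{i_2,\dots,i_m}a_{ii_2\ldots i_m}x_{i_2}\cdots x_{i_m}$; an H-eigenvalue of $\mathcal{A}\in\mathbb{S}_{m,n}$ is $\lambda\in\mathbb{R}$ with $\mathcal{A}x^{m-1}=\lambda(x_i^{m-1})_i$ for some nonzero $x\in\mathbb{R}^n$. $DNN_{m,n}$ is the set of symmetric tensors with all entries nonnegative and all H-eigenvalues nonnegative. $CP_{m,n}$ is the set of tensors $\sum_{k=1}^r(u^{(k)})^m$ with $u^{(k)}\in\mathbb{R}^n_+$. *)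

theory Defs
  imports Complex_Main "HOL-Library.Multiset"
begin

text \<open>Order-m, dimension-n real tensors are functions on index lists of length m with
 entries in {0..<n} (0-based indices). Values outside this index set are irrelevant.
 Vectors in R^n are functions nat => real restricted to {0..<n}.\<close>

type_synonym tensor = "nat list \<Rightarrow> real"
type_synonym vec = "nat \<Rightarrow> real"

definition idx :: "nat \<Rightarrow> nat \<Rightarrow> nat list set" where
  "idx m n = {is. length is = m \<and> set is \<subseteq> {..<n}}"

definition std_basis :: "nat \<Rightarrow> vec" where
  "std_basis i = (\<lambda>k. if k = i then 1 else 0)"

definition ones :: vec where
  "ones = (\<lambda>k. 1)"

definition tpow :: "vec \<Rightarrow> tensor" where
  "tpow u = (\<lambda>is. prod_list (map u is))"

definition symmetric_tensor :: "nat \<Rightarrow> nat \<Rightarrow> tensor \<Rightarrow> bool" where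
  "symmetric_tensor m n A \<longleftrightarrow>
     (\<forall>is\<in>idx m n. \<forall>js\<in>idx m n. mset is = mset js \<longrightarrow> A is = A js)"

definition tensor_apply :: "nat \<Rightarrow> nat \<Rightarrow> tensor \<Rightarrow> vec \<Rightarrow> nat \<Rightarrow> real" where
  "tensor_apply m n A x i = (\<Sum>js\<in>idx (m - 1) n. A (i # js) * prod_list (map x js))"

definition H_eigenvalue :: "nat \<Rightarrow> nat \<Rightarrow> tensor \<Rightarrow> real \<Rightarrow> bool" where
  "H_eigenvalue m n A lam \<longleftrightarrow>
     (\<exists>x::vec. (\<exists>i<n. x i \<noteq> 0) \<and>
        (\<forall>i<n. tensor_apply m n A x i = lam * x i ^ (m - 1)))"

definition DNN :: "nat \<Rightarrow> nat \<Rightarrow> tensor \<Rightarrow> bool" where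
  "DNN m n A \<longleftrightarrow> symmetric_tensor m n A \<and> (\<forall>is\<in>idx m n. A is \<ge> 0) \<and>
     (\<forall>lam. H_eigenvalue m n A lam \<longrightarrow> lam \<ge> 0)"

definition CP :: "nat \<Rightarrow> nat \<Rightarrow> tensor \<Rightarrow> bool" where
  "CP m n A \<longleftrightarrow> (\<exists>(r::nat) (u::nat \<Rightarrow> vec).
     (\<forall>k<r. \<forall>i<n. u k i \<ge> 0) \<and>
     (\<forall>is\<in>idx m n. A is = (\<Sum>k<r. tpow (u k) is)))"

end

theory Submission
  imports Defs
begin

lemma idx_0: "idx 0 n = {[]}" by (auto simp: idx_def)

lemma idx_Suc: "idx (Suc p) n = (\<lambda>(a,js). a#js) ` ({..<n} \<times> idx p n)"
  unfolding idx_def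
  by (auto simp: image_iff length_Suc_conv)

lemma sum_idx_prod: "(\<Sum>js\<in>idx p n. prod_list (map f js)) = (\<Sum>l<n. f l :: real)^p"
proof (induction p)
  case 0 then show ?case by (simp add: idx_0)
next
  case (Suc p)
  have inj: "inj_on (\<lambda>(a,js). a#js) ({..<n} \<times> idx p n)" by (auto simp: inj_on_def)
  have fin: "finite (idx p n)"
  proof -
    have "idx p n \<subseteq> {xs. set xs \<subseteq> {..<n} \<and> length xs = p}" by (auto simp: idx_def)
    moreover have "finite {xs. set xs \<subseteq> {..<n} \<and> length xs = p}"
      by (rule finite_lists_length_eq) simp
    ultimately show ?thesis by (rule finite_subset)
  qed
  have "(\<Sum>js\<in>idx (Suc p) n. prod_list (map f js))
      = (\<Sum>x\<in>{..<n} \<times> idx p n. prod_list (map f ((\<lambda>(a,js). a#js) x)))"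
    unfolding idx_Suc by (rule sum.reindex[OF inj, unfolded comp_def])
  also have "\<dots> = (\<Sum>a<n. \<Sum>js\<in>idx p n. f a * prod_list (map f js))"
    by (simp add: sum.cartesian_product split_def)
  also have "\<dots> = (\<Sum>a<n. f a) * (\<Sum>js\<in>idx p n. prod_list (map f js))"
    by (simp add: sum_product)
  finally show ?case using Suc by simp
qed

lemma tpow_mult: "tpow u js * prod_list (map x js) = prod_list (map (\<lambda>l. u l * x l) js)"
  by (induction js) (auto simp: tpow_def)

lemma abs_prod_list_le1: "(\<forall>y\<in>set xs. \<bar>y\<bar> \<le> (1::real)) \<Longrightarrow> \<bar>prod_list xs\<bar> \<le> 1"
  by (induction xs) (auto simp: abs_mult intro: mult_le_one)

lemma tpow_mset: "mset is = mset js \<Longrightarrow> tpow u is = tpow u js"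
  unfolding tpow_def by (metis mset_map prod_mset_prod_list)

theorem mainTheorem16:
  fixes m n i j :: nat and \<alpha> :: real
  assumes "m \<ge> 3" and "n \<ge> 2" and "i < n" and "j < n" and "i \<noteq> j" and "\<alpha> > 0"
  shows "DNN m n (\<lambda>is. \<alpha> * tpow (\<lambda>k. std_basis i k - std_basis j k) is + \<alpha> * tpow ones is)
       \<and> \<not> CP m n (\<lambda>is. \<alpha> * tpow (\<lambda>k. std_basis i k - std_basis j k) is + \<alpha> * tpow ones is)"
proof -
  define D where "D = (\<lambda>k. std_basis i k - std_basis j k)"
  define A where "A = (\<lambda>is. \<alpha> * tpow D is + \<alpha> * tpow ones is)"
  have sym: "symmetric_tensor m n A"
    unfolding symmetric_tensor_def A_def using tpow_mset by metis
  have Dle: "\<bar>D k\<bar> \<le> 1" for k using \<open>i \<noteq> j\<close> by (auto simp: D_def std_basis_def)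
  have nonneg: "A is \<ge> 0" for "is"
  proof -
    have "\<bar>tpow D is\<bar> \<le> 1" unfolding tpow_def by (rule abs_prod_list_le1) (auto simp: Dle)
    moreover have "tpow ones is = 1" by (induction "is") (auto simp: tpow_def ones_def)
    ultimately have "tpow D is + tpow ones is \<ge> 0" by linarith
    then show ?thesis using \<open>\<alpha> > 0\<close> unfolding A_def
      by (metis distrib_left less_eq_real_def zero_le_mult_iff)
  qed
  have tap: "tensor_apply m n A x k = \<alpha> * D k * (\<Sum>l<n. D l * x l)^(m-1) + \<alpha> * (\<Sum>l<n. x l)^(m-1)"
    for x k
  proof -
    have "tensor_apply m n A x k = (\<Sum>js\<in>idx (m - 1) n.
        \<alpha> * D k * prod_list (map (\<lambda>l. D l * x l) js) + \<alpha> * prod_list (map x js))"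
      unfolding tensor_apply_def A_def
    proof (rule sum.cong[OF refl])
      fix js
      have "tpow ones js * prod_list (map x js) = prod_list (map x js)"
        using tpow_mult[of ones js x] by (simp add: ones_def)
      then show "(\<alpha> * tpow D (k # js) + \<alpha> * tpow ones (k # js)) * prod_list (map x js) =
         \<alpha> * D k * prod_list (map (\<lambda>l. D l * x l) js) + \<alpha> * prod_list (map x js)"
        using tpow_mult[of D js x]
        by (simp add: tpow_def ones_def algebra_simps)
    qed
    also have "\<dots> = \<alpha> * D k * (\<Sum>js\<in>idx (m - 1) n. prod_list (map (\<lambda>l. D l * x l) js))
        + \<alpha> * (\<Sum>js\<in>idx (m - 1) n. prod_list (map x js))"
      by (simp add: sum.distrib sum_distrib_left)
    finally show ?thesis by (simp add: sum_idx_prod)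
  qed
  have eig: "lam \<ge> 0" if "H_eigenvalue m n A lam" for lam
  proof (rule ccontr)
    assume neg: "\<not> lam \<ge> 0"
    from that obtain x where x0: "\<exists>k<n. x k \<noteq> 0"
      and ev: "\<forall>k<n. tensor_apply m n A x k = lam * x k ^ (m - 1)"
      unfolding H_eigenvalue_def by blast
    define s where "s = (\<Sum>l<n. D l * x l)"
    define t where "t = (\<Sum>l<n. x l)"
    have ev': "\<alpha> * D k * s^(m-1) + \<alpha> * t^(m-1) = lam * x k ^ (m-1)" if "k < n" for k
      using ev that tap s_def t_def by simp
    show False
    proof (cases "even m")
      case True
      have "(\<Sum>k<n. x k * (lam * x k ^ (m-1))) = (\<Sum>k<n. x k * (\<alpha> * D k * s^(m-1) + \<alpha> * t^(m-1)))"
        using ev' by simp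
      also have "\<dots> = \<alpha> * s^(m-1) * s + \<alpha> * t^(m-1) * t"
        unfolding s_def t_def
        by (simp add: sum.distrib sum_distrib_left sum_distrib_right algebra_simps)
      also have "\<dots> = \<alpha> * s^m + \<alpha> * t^m"
      proof -
        have "m = Suc (m-1)" using \<open>m \<ge> 3\<close> by simp
        then have "\<And>y::real. y^(m-1) * y = y^m" by (metis power_Suc2)
        then show ?thesis by (simp add: mult.assoc)
      qed
      finally have eq: "lam * (\<Sum>k<n. x k ^ m) = \<alpha> * s^m + \<alpha> * t^m"
      proof -
        assume h: "(\<Sum>k<n. x k * (lam * x k ^ (m-1))) = \<alpha> * s^m + \<alpha> * t^m"
        have "x k * (lam * x k ^ (m-1)) = lam * x k ^ m" for k
          using \<open>m \<ge> 3\<close> by (cases m) (auto simp: algebra_simps)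
        then have xk: "x k * (lam * x k ^ (m-1)) = lam * x k ^ m" for k by blast
        have "(\<Sum>k<n. x k * (lam * x k ^ (m-1))) = (\<Sum>k<n. lam * x k ^ m)"
          by (simp only: xk)
        then show ?thesis using h by (simp add: sum_distrib_left)
      qed
      have "\<alpha> * s^m + \<alpha> * t^m \<ge> 0" using True \<open>\<alpha>>0\<close>
        by (simp add: zero_le_even_power)
      moreover obtain k where k: "k < n" "x k \<noteq> 0" using x0 by blast
      have "(\<Sum>k<n. x k ^ m) > 0"
      proof -
        have "(\<Sum>k<n. x k ^ m) \<ge> x k ^ m"
          using k True by (intro member_le_sum) (auto simp: zero_le_even_power)
        moreover have "x k ^ m > 0" using k True
          by (metis zero_le_even_power less_eq_real_def power_eq_0_iff)
        ultimately show ?thesis by linarith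
      qed
      ultimately show False using eq neg
        by (metis mult_neg_pos not_le)
    next
      case False
      then have ev1: "even (m-1)" using \<open>m \<ge> 3\<close> by simp
      have p1: "s^(m-1) \<ge> 0" "t^(m-1) \<ge> 0" using ev1 by (auto simp: zero_le_even_power)
      have "lam * x i ^ (m-1) \<le> 0" using ev1 neg
        by (simp add: mult_nonpos_nonneg zero_le_even_power)
      then have "\<alpha> * s^(m-1) + \<alpha> * t^(m-1) \<le> 0"
        using ev'[OF \<open>i < n\<close>] \<open>i \<noteq> j\<close> by (simp add: D_def std_basis_def)
      moreover have "\<alpha> * s^(m-1) \<ge> 0" "\<alpha> * t^(m-1) \<ge> 0"
        using p1 \<open>\<alpha>>0\<close> by simp_all
      ultimately have "\<alpha> * t^(m-1) = 0" "\<alpha> * s^(m-1) = 0" by linarith+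
      have "t^(m-1) = 0" using \<open>\<alpha> * t^(m-1) = 0\<close> \<open>\<alpha>>0\<close> by simp
      have "s^(m-1) = 0" using \<open>\<alpha> * s^(m-1) = 0\<close> using \<open>\<alpha>>0\<close> by simp
      obtain k where k: "k < n" "x k \<noteq> 0" using x0 by blast
      have "lam * x k ^ (m-1) = \<alpha> * D k * s^(m-1) + \<alpha> * t^(m-1)"
        by (rule ev'[OF k(1), symmetric])
      also have "\<dots> = 0" unfolding \<open>s^(m-1) = 0\<close> \<open>t^(m-1) = 0\<close> by simp
      finally have "lam * x k ^ (m-1) = 0" .
      then have "x k ^ (m-1) = 0" using neg by simp
      then show False using k by simp
    qed
  qed
  have dnn: "DNN m n A" unfolding DNN_def using sym nonneg eig by blast
  have ncp: "\<not> CP m n A"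
  proof
    assume "CP m n A"
    then obtain r :: nat and u :: "nat \<Rightarrow> vec" where u0: "\<forall>k<r. \<forall>l<n. u k l \<ge> 0"
      and uA: "\<forall>is\<in>idx m n. A is = (\<Sum>k<r. tpow (u k) is)"
      unfolding CP_def by blast
    define is1 where "is1 = replicate (m-1) i @ [j]"
    define is2 where "is2 = replicate (m-2) i @ [j, j]"
    have in1: "is1 \<in> idx m n" using assms by (auto simp: idx_def is1_def)
    have in2: "is2 \<in> idx m n" using assms by (auto simp: idx_def is2_def)
    have t1: "tpow v is1 = v i ^ (m-1) * v j" for v by (simp add: tpow_def is1_def)
    have t2: "tpow v is2 = v i ^ (m-2) * v j * v j" for v by (simp add: tpow_def is2_def)
    have Di: "D i = 1" and Dj: "D j = -1" using \<open>i\<noteq>j\<close> by (auto simp: D_def std_basis_def)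
    have on: "ones i = 1" "ones j = 1" by (auto simp: ones_def)
    have A1: "A is1 = 0" unfolding A_def t1 Di Dj on by simp
    have A2: "A is2 = 2 * \<alpha>" unfolding A_def t2 Di Dj on by simp
    have nn1: "\<forall>k\<in>{..<r}. tpow (u k) is1 \<ge> 0" using u0 assms unfolding t1 by auto
    have s0: "(\<Sum>k<r. tpow (u k) is1) = 0" using uA in1 A1 by simp
    have "\<forall>k\<in>{..<r}. tpow (u k) is1 = 0"
      using sum_nonneg_eq_0_iff[of "{..<r}" "\<lambda>k. tpow (u k) is1"] nn1 s0 by simp
    then have z1: "\<forall>k<r. u k i ^ (m-1) * u k j = 0" unfolding t1 by simp
    have "\<forall>k<r. tpow (u k) is2 = 0"
    proof (intro allI impI)
      fix k assume "k < r"
      then have "u k i ^ (m-1) * u k j = 0" using z1 by simp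
      then have "u k i = 0 \<or> u k j = 0" by auto
      then show "tpow (u k) is2 = 0" unfolding t2 using \<open>m \<ge> 3\<close> by (cases "m-2") auto
    qed
    then have "A is2 = 0" using uA in2 by simp
    then show False using A2 \<open>\<alpha>>0\<close> by simp
  qed
  show ?thesis using dnn ncp unfolding A_def D_def by simp
qed

end
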